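(* Let $(G,\cdot,N,\star,\odot)$ be a left skew bracoid and $(H,\circ)$ a group. Assume $\boxdot$ is a transitive right action of $(H,\circ)$ on $N$ such that $g\odot(\eta\boxdot h)=(g\odot\eta)\boxdot h$ for all $g\in G$, $h\in H$, $\eta\in N$. Then for all $g\in G$, $\eta\in N$, $h\in H$, $$(g\odot\eta)^{\beta(h)}=({}^{\alpha(g)}(\eta^{\beta(h)}))\star(\eta^{\beta(h)})\star({}^{\alpha(g)}(e_N\boxdot h)).$$
   Context: For a group $(N,\star)$, $e_N$ denotes its identity and $\overline{\eta}$ the inverse of $\eta$. A left skew bracoid is $(G,\cdot,N,\star,\odot)$ with $(G,\cdot),(N,\star)$ groups and $\odot$ a transitive left action of $G$ on $N$ with $g\odot(\mu\star\eta)=(g\odot\mu)\star\overline{(g\odot e_N)}\star(g\odot\eta)$ for all $g\in G$, $\mu,\eta\in N$. For $g\in G$, ${}^{\alpha(g)}\eta=\overline{(g\odot e_N)}\star(g\odot\eta)\star\overline{\eta}$. For $h\in H$, $\eta^{\beta(h)}=\overline{\eta}\star(\eta\boxdot h)\star\overline{(e_N\boxdot h)}$. *)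

theory Defs
  imports "HOL-Algebra.Group"
begin

definition left_action :: "('g, 'a) monoid_scheme \<Rightarrow> ('n, 'b) monoid_scheme \<Rightarrow> ('g \<Rightarrow> 'n \<Rightarrow> 'n) \<Rightarrow> bool" where
  "left_action G N act \<longleftrightarrow>
     (\<forall>g\<in>carrier G. \<forall>\<eta>\<in>carrier N. act g \<eta> \<in> carrier N) \<and>
     (\<forall>\<eta>\<in>carrier N. act \<one>\<^bsub>G\<^esub> \<eta> = \<eta>) \<and>
     (\<forall>g\<in>carrier G. \<forall>h\<in>carrier G. \<forall>\<eta>\<in>carrier N. act (g \<otimes>\<^bsub>G\<^esub> h) \<eta> = act g (act h \<eta>))"

definition transitive_left_action :: "('g, 'a) monoid_scheme \<Rightarrow> ('n, 'b) monoid_scheme \<Rightarrow> ('g \<Rightarrow> 'n \<Rightarrow> 'n) \<Rightarrow> bool" where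
  "transitive_left_action G N act \<longleftrightarrow> left_action G N act \<and>
     (\<forall>\<mu>\<in>carrier N. \<forall>\<eta>\<in>carrier N. \<exists>g\<in>carrier G. act g \<mu> = \<eta>)"

definition right_action :: "('h, 'a) monoid_scheme \<Rightarrow> ('n, 'b) monoid_scheme \<Rightarrow> ('n \<Rightarrow> 'h \<Rightarrow> 'n) \<Rightarrow> bool" where
  "right_action H N ract \<longleftrightarrow>
     (\<forall>h\<in>carrier H. \<forall>\<eta>\<in>carrier N. ract \<eta> h \<in> carrier N) \<and>
     (\<forall>\<eta>\<in>carrier N. ract \<eta> \<one>\<^bsub>H\<^esub> = \<eta>) \<and>
     (\<forall>h\<in>carrier H. \<forall>k\<in>carrier H. \<forall>\<eta>\<in>carrier N. ract \<eta> (h \<otimes>\<^bsub>H\<^esub> k) = ract (ract \<eta> h) k)"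

definition transitive_right_action :: "('h, 'a) monoid_scheme \<Rightarrow> ('n, 'b) monoid_scheme \<Rightarrow> ('n \<Rightarrow> 'h \<Rightarrow> 'n) \<Rightarrow> bool" where
  "transitive_right_action H N ract \<longleftrightarrow> right_action H N ract \<and>
     (\<forall>\<mu>\<in>carrier N. \<forall>\<eta>\<in>carrier N. \<exists>h\<in>carrier H. ract \<mu> h = \<eta>)"

definition left_skew_bracoid :: "('g, 'a) monoid_scheme \<Rightarrow> ('n, 'b) monoid_scheme \<Rightarrow> ('g \<Rightarrow> 'n \<Rightarrow> 'n) \<Rightarrow> bool" where
  "left_skew_bracoid G N act \<longleftrightarrow> group G \<and> group N \<and> transitive_left_action G N act \<and>
     (\<forall>g\<in>carrier G. \<forall>\<mu>\<in>carrier N. \<forall>\<eta>\<in>carrier N.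
        act g (\<mu> \<otimes>\<^bsub>N\<^esub> \<eta>) = act g \<mu> \<otimes>\<^bsub>N\<^esub> inv\<^bsub>N\<^esub> (act g \<one>\<^bsub>N\<^esub>) \<otimes>\<^bsub>N\<^esub> act g \<eta>)"

definition alpha :: "('n, 'b) monoid_scheme \<Rightarrow> ('g \<Rightarrow> 'n \<Rightarrow> 'n) \<Rightarrow> 'g \<Rightarrow> 'n \<Rightarrow> 'n" where
  "alpha N act g \<eta> = inv\<^bsub>N\<^esub> (act g \<one>\<^bsub>N\<^esub>) \<otimes>\<^bsub>N\<^esub> act g \<eta> \<otimes>\<^bsub>N\<^esub> inv\<^bsub>N\<^esub> \<eta>"

definition beta :: "('n, 'b) monoid_scheme \<Rightarrow> ('n \<Rightarrow> 'h \<Rightarrow> 'n) \<Rightarrow> 'h \<Rightarrow> 'n \<Rightarrow> 'n" where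
  "beta N ract h \<eta> = inv\<^bsub>N\<^esub> \<eta> \<otimes>\<^bsub>N\<^esub> ract \<eta> h \<otimes>\<^bsub>N\<^esub> inv\<^bsub>N\<^esub> (ract \<one>\<^bsub>N\<^esub> h)"

end

theory Submission
  imports Defs
begin

theorem proposition3p4:
  fixes G :: "('g, 'a) monoid_scheme" and N :: "('n, 'b) monoid_scheme"
    and H :: "('h, 'c) monoid_scheme"
    and act :: "'g \<Rightarrow> 'n \<Rightarrow> 'n" and ract :: "'n \<Rightarrow> 'h \<Rightarrow> 'n"
  assumes "left_skew_bracoid G N act"
    and "group H"
    and "transitive_right_action H N ract"
    and "\<forall>g\<in>carrier G. \<forall>h\<in>carrier H. \<forall>\<eta>\<in>carrier N. act g (ract \<eta> h) = ract (act g \<eta>) h"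
    and "g \<in> carrier G" and "\<eta> \<in> carrier N" and "h \<in> carrier H"
  shows "beta N ract h (act g \<eta>) =
           alpha N act g (beta N ract h \<eta>) \<otimes>\<^bsub>N\<^esub> beta N ract h \<eta> \<otimes>\<^bsub>N\<^esub> alpha N act g (ract \<one>\<^bsub>N\<^esub> h)"
proof -
  interpret N: group N using assms(1) unfolding left_skew_bracoid_def by blast
  have hom: "\<And>\<mu> \<nu>. \<mu> \<in> carrier N \<Longrightarrow> \<nu> \<in> carrier N \<Longrightarrow>
      act g (\<mu> \<otimes>\<^bsub>N\<^esub> \<nu>) = act g \<mu> \<otimes>\<^bsub>N\<^esub> inv\<^bsub>N\<^esub> (act g \<one>\<^bsub>N\<^esub>) \<otimes>\<^bsub>N\<^esub> act g \<nu>"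
    using assms(1,5) unfolding left_skew_bracoid_def by blast
  have actc: "\<And>\<mu>. \<mu> \<in> carrier N \<Longrightarrow> act g \<mu> \<in> carrier N"
    using assms(1,5) unfolding left_skew_bracoid_def transitive_left_action_def left_action_def by blast
  have rc: "\<And>\<mu>. \<mu> \<in> carrier N \<Longrightarrow> ract \<mu> h \<in> carrier N"
    using assms(3,7) unfolding transitive_right_action_def right_action_def by blast
  define x where "x = act g \<one>\<^bsub>N\<^esub>"
  define eh where "eh = ract \<one>\<^bsub>N\<^esub> h"
  define nh where "nh = ract \<eta> h"
  define gi where "gi = act g (inv\<^bsub>N\<^esub> \<eta>)"
  define gn where "gn = act g \<eta>"
  have xc: "x \<in> carrier N" using actc x_def by simp
  have ehc: "eh \<in> carrier N" using rc eh_def by simp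
  have nhc: "nh \<in> carrier N" using rc nh_def assms(6) by simp
  have gic: "gi \<in> carrier N" using actc gi_def assms(6) by simp
  have gnc: "gn \<in> carrier N" using actc gn_def assms(6) by simp
  have gnh: "act g nh \<in> carrier N" using actc nhc by simp
  have geh: "act g eh \<in> carrier N" using actc ehc by simp
  have key: "x = gi \<otimes>\<^bsub>N\<^esub> inv\<^bsub>N\<^esub> x \<otimes>\<^bsub>N\<^esub> gn"
    using hom[of "inv\<^bsub>N\<^esub> \<eta>" \<eta>] assms(6) unfolding x_def gi_def gn_def by simp
  have key2: "inv\<^bsub>N\<^esub> x \<otimes>\<^bsub>N\<^esub> gi \<otimes>\<^bsub>N\<^esub> inv\<^bsub>N\<^esub> x = inv\<^bsub>N\<^esub> gn"
  proof -
    have "inv\<^bsub>N\<^esub> x \<otimes>\<^bsub>N\<^esub> gi \<otimes>\<^bsub>N\<^esub> inv\<^bsub>N\<^esub> x \<otimes>\<^bsub>N\<^esub> gn = inv\<^bsub>N\<^esub> x \<otimes>\<^bsub>N\<^esub> x"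
      by (subst (2) key) (simp add: xc gic gnc N.m_assoc)
    also have "\<dots> = \<one>\<^bsub>N\<^esub>" using xc by simp
    finally show ?thesis using xc gic gnc
      by (metis N.inv_closed N.inv_equality N.m_closed)
  qed
  define b where "b = inv\<^bsub>N\<^esub> \<eta> \<otimes>\<^bsub>N\<^esub> nh \<otimes>\<^bsub>N\<^esub> inv\<^bsub>N\<^esub> eh"
  have bc: "b \<in> carrier N" using b_def assms(6) nhc ehc by simp
  have gb: "act g b \<in> carrier N" using actc bc by simp
  have beh: "b \<otimes>\<^bsub>N\<^esub> eh = inv\<^bsub>N\<^esub> \<eta> \<otimes>\<^bsub>N\<^esub> nh"
    using assms(6) nhc ehc by (simp add: b_def N.m_assoc)
  have "alpha N act g b \<otimes>\<^bsub>N\<^esub> b \<otimes>\<^bsub>N\<^esub> alpha N act g eh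
      = inv\<^bsub>N\<^esub> x \<otimes>\<^bsub>N\<^esub> (act g b \<otimes>\<^bsub>N\<^esub> inv\<^bsub>N\<^esub> x \<otimes>\<^bsub>N\<^esub> act g eh) \<otimes>\<^bsub>N\<^esub> inv\<^bsub>N\<^esub> eh"
    unfolding alpha_def x_def[symmetric] using xc bc ehc gb geh
    by (simp add: N.m_assoc)
  also have "\<dots> = inv\<^bsub>N\<^esub> x \<otimes>\<^bsub>N\<^esub> act g (inv\<^bsub>N\<^esub> \<eta> \<otimes>\<^bsub>N\<^esub> nh) \<otimes>\<^bsub>N\<^esub> inv\<^bsub>N\<^esub> eh"
    using hom[OF bc ehc] beh x_def by simp
  also have "\<dots> = inv\<^bsub>N\<^esub> x \<otimes>\<^bsub>N\<^esub> gi \<otimes>\<^bsub>N\<^esub> inv\<^bsub>N\<^esub> x \<otimes>\<^bsub>N\<^esub> act g nh \<otimes>\<^bsub>N\<^esub> inv\<^bsub>N\<^esub> eh"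
    using hom[of "inv\<^bsub>N\<^esub> \<eta>" nh] assms(6) nhc xc gic gnh ehc
    unfolding gi_def[symmetric] x_def[symmetric] by (simp add: N.m_assoc)
  also have "\<dots> = inv\<^bsub>N\<^esub> gn \<otimes>\<^bsub>N\<^esub> act g nh \<otimes>\<^bsub>N\<^esub> inv\<^bsub>N\<^esub> eh"
    using key2 by simp
  also have "\<dots> = beta N ract h (act g \<eta>)"
    unfolding beta_def gn_def nh_def eh_def using assms(4,5,6,7) by simp
  finally show ?thesis unfolding b_def nh_def eh_def beta_def by simp
qed

end
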